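(* Let $u\in(0,1/2)$ and let $f\in L^1(\mu)$ be strictly increasing on $[0,1]$. Then \[\int_u^1 \hat F f\,d\mu<\int_u^1 f\,d\mu;\] more precisely, $\int_u^1 f\,d\mu-\int_u^1\hat F f\,d\mu\ge \bigl(f(\tfrac{1}{1+u})-f(u)\bigr)\log(1+u)$.
   Context: $\mu$ is the measure on $[0,1]$ with $d\mu=dx/x$. $\hat F$ is the transfer operator of the Farey map $F$ (where $F(x)=x/(1-x)$ for $0\le x\le1/2$, $F(x)=(1-x)/x$ for $1/2<x\le1$) with respect to $\mu$, i.e. the positive linear operator on $L^1(\mu)$ with $\int_B\hat Ff\,d\mu=\int_{F^{-1}B}f\,d\mu$ for all Borel $B\subseteq[0,1]$; explicitly $\hat Ff(x)=\dfrac{f(x/(1+x))+x\,f(1/(1+x))}{1+x}$. *)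

theory Defs
  imports "HOL-Analysis.Analysis"
begin

definition farey_mu :: "real measure" where
  "farey_mu = density (restrict_space lborel {0..1}) (\<lambda>x. ennreal (1 / x))"

text \<open>Transfer operator of the Farey map with respect to mu (explicit formula).\<close>
definition farey_transfer :: "(real \<Rightarrow> real) \<Rightarrow> real \<Rightarrow> real" where
  "farey_transfer f x = (f (x / (1 + x)) + x * f (1 / (1 + x))) / (1 + x)"

end

theory Submission
  imports Defs
begin

lemma bdd_int:
  fixes h :: "real \<Rightarrow> real"
  assumes [measurable]: "h \<in> borel_measurable borel"
    and bnd: "\<And>x. x \<in> {a..b} \<Longrightarrow> \<bar>h x\<bar> \<le> C"
  shows "set_integrable lborel {a..b} h"
  unfolding set_integrable_def
  by (rule integrableI_bounded_set[where A="{a..b}" and B=C]) (auto simp: bnd indicator_def emeasure_lborel_Icc_eq)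

lemma quot_int:
  fixes h :: "real \<Rightarrow> real"
  assumes [measurable]: "h \<in> borel_measurable borel"
    and bnd: "\<And>x. \<bar>h x\<bar> \<le> C" and a: "0 < a"
  shows "set_integrable lborel {a..b} (\<lambda>x. h x / x)"
proof (rule bdd_int[where C="C/a"])
  fix x assume x: "x \<in> {a..b}"
  have C: "0 \<le> C" using bnd[of 0] by linarith
  have "\<bar>h x / x\<bar> = \<bar>h x\<bar> / x" using x a by (simp add: abs_div)
  also have "\<dots> \<le> C / x" using x a bnd[of x] by (simp add: divide_right_mono)
  also have "\<dots> \<le> C / a" using x a C by (simp add: divide_left_mono)
  finally show "\<bar>h x / x\<bar> \<le> C / a" .
qed simp

lemma quot_iint:
  fixes h :: "real \<Rightarrow> real"
  assumes [measurable]: "h \<in> borel_measurable borel"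
    and bnd: "\<And>x. \<bar>h x\<bar> \<le> C" and a: "0 < a" and ab: "a \<le> b"
  shows "interval_lebesgue_integrable lborel (ereal a) (ereal b) (\<lambda>x. h x / x)"
  unfolding interval_lebesgue_integrable_def
  using set_integrable_subset[OF quot_int[OF assms(1,2,3), of b], of "{a<..<b}"] ab
  by (auto simp: subset_iff)

lemma I_sum:
  fixes h :: "real \<Rightarrow> real"
  assumes [measurable]: "h \<in> borel_measurable borel"
    and bnd: "\<And>x. \<bar>h x\<bar> \<le> C" and a: "0 < a" and "a \<le> b" "b \<le> c"
  shows "(LBINT x=ereal a..ereal b. h x / x) + (LBINT x=ereal b..ereal c. h x / x) = (LBINT x=ereal a..ereal c. h x / x)"
proof (rule interval_integral_sum)
  have "min (ereal a) (min (ereal b) (ereal c)) = ereal a" "max (ereal a) (max (ereal b) (ereal c)) = ereal c"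
    using assms by auto
  then show "interval_lebesgue_integrable lborel (min (ereal a) (min (ereal b) (ereal c))) (max (ereal a) (max (ereal b) (ereal c))) (\<lambda>x. h x / x)"
    using quot_iint[OF assms(1,2,3)] assms by simp
qed

lemma mu_int:
  fixes g :: "real \<Rightarrow> real"
  assumes [measurable]: "g \<in> borel_measurable borel" and "0 < a" "a \<le> b" "b \<le> 1"
  shows "(\<integral>x\<in>{a..b}. g x \<partial>farey_mu) = (LBINT x=ereal a..ereal b. g x / x)"
proof -
  have "(\<integral>x\<in>{a..b}. g x \<partial>farey_mu) = integral\<^sup>L (restrict_space lborel {0..1}) (\<lambda>x. (1/x) *\<^sub>R (indicator {a..b} x *\<^sub>R g x))"
    unfolding farey_mu_def set_lebesgue_integral_def
    by (rule integral_density) (auto intro!: AE_I2 measurable_restrict_space1 simp: space_restrict_space)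
  also have "\<dots> = integral\<^sup>L lborel (\<lambda>x. indicator {0..1} x *\<^sub>R ((1/x) *\<^sub>R (indicator {a..b} x *\<^sub>R g x)))"
    by (rule integral_restrict_space) auto
  also have "\<dots> = (LBINT x:{a..b}. g x / x)"
    unfolding set_lebesgue_integral_def
    by (intro Bochner_Integration.integral_cong) (use assms in \<open>auto simp: indicator_def\<close>)
  also have "\<dots> = (LBINT x=ereal a..ereal b. g x / x)"
    using assms by (simp add: interval_integral_Icc)
  finally show ?thesis .
qed

lemma lower_bd:
  fixes h :: "real \<Rightarrow> real"
  assumes [measurable]: "h \<in> borel_measurable borel"
    and bnd: "\<And>x. \<bar>h x\<bar> \<le> C" and a: "0 < a" and ab: "a \<le> b"
    and mono: "\<And>x. x \<in> {a..b} \<Longrightarrow> h a \<le> h x"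
  shows "(LBINT x=ereal a..ereal b. h x / x) \<ge> h a * (ln b - ln a)"
proof -
  have "(LBINT x=ereal a..ereal b. h a / x) = h a * ln b - h a * ln a"
  proof (rule interval_integral_FTC_finite)
    show "continuous_on {min a b..max a b} (\<lambda>x. h a / x)"
      using a ab by (intro continuous_intros) auto
    fix x assume "min a b \<le> x" "x \<le> max a b"
    then have x: "0 < x" using a ab by auto
    show "((\<lambda>x. h a * ln x) has_vector_derivative h a / x) (at x within {min a b..max a b})"
      unfolding has_real_derivative_iff_has_vector_derivative[symmetric]
      using x by (auto intro!: derivative_eq_intros)
  qed
  moreover have "(LBINT x=ereal a..ereal b. h a / x) \<le> (LBINT x=ereal a..ereal b. h x / x)"
  proof -
    have c: "\<And>x. \<bar>h a\<bar> \<le> C" using bnd by auto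
    have "(LBINT x:{a..b}. h a / x) \<le> (LBINT x:{a..b}. h x / x)"
      apply (rule set_integral_mono)
        apply (rule quot_int[OF _ c a]; simp)
       apply (rule quot_int[OF _ bnd a]; simp)
      using a mono by (auto simp: divide_right_mono)
    then show ?thesis using ab by (simp add: interval_integral_Icc)
  qed
  ultimately show ?thesis by (simp add: algebra_simps)
qed

lemma upper_bd:
  fixes h :: "real \<Rightarrow> real"
  assumes [measurable]: "h \<in> borel_measurable borel"
    and bnd: "\<And>x. \<bar>h x\<bar> \<le> C" and a: "0 < a" and ab: "a \<le> b"
    and mono: "\<And>x. x \<in> {a..b} \<Longrightarrow> h x \<le> h b"
  shows "(LBINT x=ereal a..ereal b. h x / x) \<le> h b * (ln b - ln a)"
proof -
  have "(LBINT x=ereal a..ereal b. h b / x) = h b * ln b - h b * ln a"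
  proof (rule interval_integral_FTC_finite)
    show "continuous_on {min a b..max a b} (\<lambda>x. h b / x)"
      using a ab by (intro continuous_intros) auto
    fix x assume "min a b \<le> x" "x \<le> max a b"
    then have x: "0 < x" using a ab by auto
    show "((\<lambda>x. h b * ln x) has_vector_derivative h b / x) (at x within {min a b..max a b})"
      unfolding has_real_derivative_iff_has_vector_derivative[symmetric]
      using x by (auto intro!: derivative_eq_intros)
  qed
  moreover have "(LBINT x=ereal a..ereal b. h x / x) \<le> (LBINT x=ereal a..ereal b. h b / x)"
  proof -
    have c: "\<And>x. \<bar>h b\<bar> \<le> C" using bnd by auto
    have "(LBINT x:{a..b}. h x / x) \<le> (LBINT x:{a..b}. h b / x)"
      apply (rule set_integral_mono)
        apply (rule quot_int[OF _ bnd a]; simp)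
       apply (rule quot_int[OF _ c a]; simp)
      using a mono by (auto simp: divide_right_mono)
    then show ?thesis using ab by (simp add: interval_integral_Icc)
  qed
  ultimately show ?thesis by (simp add: algebra_simps)
qed

lemma iint_of_set:
  fixes h :: "real \<Rightarrow> real"
  assumes "set_integrable lborel {a..b} h" "a \<le> b"
  shows "interval_lebesgue_integrable lborel (ereal a) (ereal b) h"
  unfolding interval_lebesgue_integrable_def
  using set_integrable_subset[OF assms(1), of "{a<..<b}"] assms(2)
  by (auto simp: subset_iff)

theorem mainTheorem4:
  fixes f :: "real \<Rightarrow> real" and u :: real
  assumes "0 < u" and "u < 1/2"
    and "integrable farey_mu f"
    and "strict_mono_on {0..1} f"
  shows "(\<integral>x\<in>{u..1}. farey_transfer f x \<partial>farey_mu) < (\<integral>x\<in>{u..1}. f x \<partial>farey_mu) \<and>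
         (\<integral>x\<in>{u..1}. f x \<partial>farey_mu) - (\<integral>x\<in>{u..1}. farey_transfer f x \<partial>farey_mu)
           \<ge> (f (1 / (1 + u)) - f u) * ln (1 + u)"
proof -
  have u0: "0 < u" and u2: "u < 1/2" using assms by auto
  have fm: "mono_on {0..1} f" using assms(4) by (rule strict_mono_on_imp_mono_on)
  define f0 where "f0 x = f (max 0 (min 1 x))" for x
  have f0_eq: "f0 x = f x" if "x \<in> {0..1}" for x using that by (auto simp: f0_def)
  have "mono f0"
    unfolding mono_def f0_def by (auto intro!: mono_onD[OF fm])
  then have meas[measurable]: "f0 \<in> borel_measurable borel" by (rule borel_measurable_mono)
  define C where "C = \<bar>f 0\<bar> + \<bar>f 1\<bar>"
  have bnd: "\<bar>f0 x\<bar> \<le> C" for x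
  proof -
    have "f 0 \<le> f0 x" "f0 x \<le> f 1" unfolding f0_def by (auto intro!: mono_onD[OF fm])
    then show ?thesis unfolding C_def by linarith
  qed
  have Tmeas[measurable]: "(\<lambda>x. farey_transfer f0 x) \<in> borel_measurable borel"
    unfolding farey_transfer_def by measurable
  have eqf: "(\<integral>x\<in>{u..1}. f x \<partial>farey_mu) = (\<integral>x\<in>{u..1}. f0 x \<partial>farey_mu)"
    unfolding set_lebesgue_integral_def
    by (intro Bochner_Integration.integral_cong) (use u0 in \<open>auto simp: indicator_def f0_eq\<close>)
  have eqT: "(\<integral>x\<in>{u..1}. farey_transfer f x \<partial>farey_mu) = (\<integral>x\<in>{u..1}. farey_transfer f0 x \<partial>farey_mu)"
    unfolding set_lebesgue_integral_def
  proof (intro Bochner_Integration.integral_cong refl)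
    fix x
    show "indicator {u..1} x *\<^sub>R farey_transfer f x = indicator {u..1} x *\<^sub>R farey_transfer f0 x"
    proof (cases "x \<in> {u..1}")
      case True
      then have x: "0 < x" using u0 by auto
      have "x / (1 + x) \<in> {0..1}" "1 / (1 + x) \<in> {0..1}" using x by (auto simp: field_simps)
      then show ?thesis by (simp add: farey_transfer_def f0_eq)
    qed simp
  qed
  define I where "I a b = (LBINT x=ereal a..ereal b. f0 x / x)" for a b
  have mf: "(\<integral>x\<in>{u..1}. f0 x \<partial>farey_mu) = I u 1"
    unfolding I_def using u0 u2 by (intro mu_int) auto
  have mT: "(\<integral>x\<in>{u..1}. farey_transfer f0 x \<partial>farey_mu) = (LBINT x=ereal u..ereal 1. farey_transfer f0 x / x)"
    using u0 u2 by (intro mu_int) auto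
  define P where "P x = f0 (x / (1 + x)) / (x / (1 + x)) * (1 / (1 + x)^2)" for x
  define Q where "Q x = f0 (- (- 1 / (1 + x))) / (- (- 1 / (1 + x))) * (1 / (1 + x)^2)" for x
  have sub1: "set_integrable lborel {u..1} P \<and> I (u/(1+u)) (1/2) = (LBINT x=ereal u..ereal 1. P x)"
  proof -
    have "u / (1+u) > 0" using u0 by simp
    note q = quot_int[OF meas bnd this, of "1/(1+1)"]
    have d: "((\<lambda>x. x / (1 + x)) has_real_derivative 1/(1+x)^2) (at x)" if "x \<in> {u..1}" for x
      using that u0 by (auto intro!: derivative_eq_intros simp: field_simps power2_eq_square)
    have c: "continuous_on {u..1} (\<lambda>x. 1/(1+x)^2 :: real)"
      using u0 by (intro continuous_intros) (auto simp: add_pos_pos)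
    note r = interval_integral_substitution[where f="\<lambda>y. f0 y / y" and g="\<lambda>x. x/(1+x)" and a=u and b=1 and g'="\<lambda>x. 1/(1+x)^2", OF q d c]
    show ?thesis using r u0 u2 unfolding P_def I_def by simp
  qed
  have sub2: "set_integrable lborel {u..1} Q \<and> I (1/2) (1/(1+u)) = (LBINT x=ereal u..ereal 1. Q x)"
  proof -
    have q: "set_integrable lborel {- 1 / (1 + u)..- 1 / (1 + 1)} (\<lambda>z. f0 (- z) / (- z))"
    proof (rule bdd_int[where C="2*C"])
      fix z :: real assume z: "z \<in> {- 1 / (1 + u)..- 1 / (1 + 1)}"
      then have z1: "1/2 \<le> -z" by auto
      have C: "0 \<le> C" using bnd[of 0] by linarith
      have "\<bar>f0 (- z) / (- z)\<bar> = \<bar>f0 (-z)\<bar> / (-z)" using z1 by (simp add: abs_div)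
      also have "\<dots> \<le> C / (-z)" using z1 bnd[of "-z"] by (intro divide_right_mono) auto
      also have "\<dots> \<le> C / (1/2)" using z1 C by (intro divide_left_mono) auto
      finally show "\<bar>f0 (- z) / (- z)\<bar> \<le> 2 * C" by simp
    qed simp
    have d: "((\<lambda>x. - 1 / (1 + x)) has_real_derivative 1/(1+x)^2) (at x)" if "x \<in> {u..1}" for x
      using that u0 by (auto intro!: derivative_eq_intros simp: field_simps power2_eq_square)
    have c: "continuous_on {u..1} (\<lambda>x. 1/(1+x)^2 :: real)"
      using u0 by (intro continuous_intros) (auto simp: add_pos_pos)
    note r = interval_integral_substitution[where f="\<lambda>z. f0 (- z) / (- z)" and g="\<lambda>x. - 1/(1+x)" and a=u and b=1 and g'="\<lambda>x. 1/(1+x)^2", OF q d c]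
    have refl: "I (1/2) (1/(1+u)) = (LBINT x=ereal (- 1 / (1 + u))..ereal (- 1 / (1 + 1)). f0 (- x) / (- x))"
      unfolding I_def by (subst interval_integral_reflect) simp
    show ?thesis using r u0 u2 refl unfolding Q_def by simp
  qed
  have uu: "u * u < u" using mult_strict_left_mono[of u 1 u] u0 u2 by simp
  have uu2: "u + u * u < 1" using uu u2 by linarith
  have ab: "u / (1+u) \<le> 1/2" "1/2 \<le> 1/(1+u)" "u \<le> 1/(1+u)" "u/(1+u) \<le> u" "1/(1+u) \<le> 1"
    using u0 u2 uu2 by (auto simp: field_simps)
  have upos: "0 < u/(1+u)" using u0 by simp
  have "(LBINT x=ereal u..ereal 1. farey_transfer f0 x / x) = (LBINT x=ereal u..ereal 1. P x + Q x)"
  proof (rule interval_lebesgue_integral_cong)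
    fix x assume "x \<in> einterval (ereal u) (ereal 1)"
    then have x: "0 < x" using u0 by auto
    then have x1: "1 + x \<noteq> 0" by linarith
    have g: "(A + x * B) / (1 + x) / x = A / (x / (1 + x)) * (1 / (1 + x)^2) + B / (1 / (1 + x)) * (1 / (1 + x)^2)" for A B :: real
    proof -
      have p: "0 < 1 + x" using x by simp
      have "A / (x / (1 + x)) * (1 / (1 + x)^2) = A / (x * (1 + x))"
        using x p by (simp add: power2_eq_square)
      moreover have "B / (1 / (1 + x)) * (1 / (1 + x)^2) = B / (1 + x)"
        using x p by (simp add: power2_eq_square)
      moreover have "(A + x * B) / (1 + x) / x = A / (x * (1 + x)) + B / (1 + x)"
        using x p by (simp add: add_divide_distrib)
      ultimately show ?thesis by simp
    qed
    show "farey_transfer f0 x / x = P x + Q x"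
      unfolding farey_transfer_def P_def Q_def using g by simp
  qed (use u2 in auto)
  also have "\<dots> = (LBINT x=ereal u..ereal 1. P x) + (LBINT x=ereal u..ereal 1. Q x)"
    using sub1 sub2 u2 by (intro interval_lebesgue_integral_add(2) iint_of_set) auto
  also have "\<dots> = I (u/(1+u)) (1/2) + I (1/2) (1/(1+u))" using sub1 sub2 by simp
  also have "\<dots> = I (u/(1+u)) (1/(1+u))" unfolding I_def
    using ab upos u0 u2 by (intro I_sum[OF meas bnd]) auto
  also have "\<dots> = I (u/(1+u)) u + I u (1/(1+u))" unfolding I_def
    using ab upos u0 u2 by (intro I_sum[OF meas bnd, symmetric]) auto
  finally have T: "(\<integral>x\<in>{u..1}. farey_transfer f x \<partial>farey_mu) = I (u/(1+u)) u + I u (1/(1+u))"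
    using eqT mT by simp
  have F: "(\<integral>x\<in>{u..1}. f x \<partial>farey_mu) = I u (1/(1+u)) + I (1/(1+u)) 1"
    using eqf mf ab u0 unfolding I_def by (simp add: I_sum[OF meas bnd])
  have mono0: "f0 x \<le> f0 y" if "x \<le> y" for x y using \<open>mono f0\<close> that by (simp add: mono_def)
  have L: "I (1/(1+u)) 1 \<ge> f0 (1/(1+u)) * (ln 1 - ln (1/(1+u)))"
    unfolding I_def using ab u0 by (intro lower_bd[OF meas bnd] mono0) auto
  have U: "I (u/(1+u)) u \<le> f0 u * (ln u - ln (u/(1+u)))"
    unfolding I_def using ab upos by (intro upper_bd[OF meas bnd] mono0) auto
  have l1: "ln 1 - ln (1/(1+u)) = ln (1+u)" using u0 by (simp add: ln_div)
  have l2: "ln u - ln (u/(1+u)) = ln (1+u)" using u0 by (simp add: ln_div)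
  have e1: "f0 (1/(1+u)) = f (1/(1+u))" using ab u0 by (intro f0_eq) auto
  have e2: "f0 u = f u" using u0 u2 by (intro f0_eq) auto
  have lt: "f u < f (1/(1+u))"
  proof -
    have "u < 1/(1+u)" using u0 u2 uu2 by (auto simp: field_simps)
    note lt0 = this
    have "u \<in> {0..1}" "1/(1+u) \<in> {0..1}" using u0 u2 ab by auto
    then show ?thesis using strict_mono_onD[OF assms(4) _ _ lt0] by blast
  qed
  have lnp: "0 < ln (1+u)" using u0 by simp
  have ge: "(\<integral>x\<in>{u..1}. f x \<partial>farey_mu) - (\<integral>x\<in>{u..1}. farey_transfer f x \<partial>farey_mu)
           \<ge> (f (1 / (1 + u)) - f u) * ln (1 + u)"
  proof -
    have L': "I (1/(1+u)) 1 \<ge> f (1/(1+u)) * ln (1+u)" using L by (simp only: l1 e1)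
    have U': "I (u/(1+u)) u \<le> f u * ln (1+u)" using U by (simp only: l2 e2)
    show ?thesis using T F L' U' by (simp add: left_diff_distrib)
  qed
  moreover have "0 < (f (1 / (1 + u)) - f u) * ln (1 + u)" using lt lnp by simp
  ultimately show ?thesis by linarith
qed

end
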